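(* Let $A,B\in M_n(\mathbb{R}_+)$ be nilpotent and let $C=[A,B]_\oplus=AB\oplus BA$. If the digraph $G_{A\oplus B}$ contains a directed cycle, then there exist indices $u,w$ such that $C_{uw}>0$.
   Context: Max algebra: $\mathbb{R}_+$ the nonnegative reals with $a\oplus b=\max\{a,b\}$ and ordinary multiplication; for $A,B\in M_n(\mathbb{R}_+)$, $(AB)_{ij}=\max_k a_{ik}b_{kj}$ and $(A\oplus B)_{ij}=\max\{a_{ij},b_{ij}\}$. A matrix $A$ is nilpotent if $A^k=0$ for some $k\in\mathbb{N}$ (powers in the max-product). The digraph $G_M$ of $M=(m_{ij})$ has vertices $\{1,\dots,n\}$ and an edge $i\to j$ iff $m_{ij}>0$. *)

theory Defs
  imports "HOL-Analysis.Analysis"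
begin

text \<open>Max algebra over the nonnegative reals. Matrices in M_n(R_+) are rendered
as real^'n^'n (index type 'n finite, n = CARD('n)) with all entries nonnegative.\<close>

definition nonneg_mat :: "real^'n^'n \<Rightarrow> bool" where
  "nonneg_mat A \<longleftrightarrow> (\<forall>i j. A $ i $ j \<ge> 0)"

definition max_mult :: "real^'n::finite^'n \<Rightarrow> real^'n^'n \<Rightarrow> real^'n^'n" (infixl "\<otimes>\<^sub>m" 70) where
  "A \<otimes>\<^sub>m B = (\<chi> i j. Max {A $ i $ k * B $ k $ j | k. True})"

definition max_add :: "real^'n^'n \<Rightarrow> real^'n^'n \<Rightarrow> real^'n^'n" (infixl "\<oplus>\<^sub>m" 65) where
  "A \<oplus>\<^sub>m B = (\<chi> i j. max (A $ i $ j) (B $ i $ j))"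

primrec max_pow :: "real^'n::finite^'n \<Rightarrow> nat \<Rightarrow> real^'n^'n" where
  "max_pow A 0 = mat 1"
| "max_pow A (Suc k) = max_pow A k \<otimes>\<^sub>m A"

definition max_nilpotent :: "real^'n::finite^'n \<Rightarrow> bool" where
  "max_nilpotent A \<longleftrightarrow> (\<exists>k. max_pow A k = 0)"

text \<open>Digraph G_M: edge i \<rightarrow> j iff M_ij > 0. A directed cycle is a closed walk
v_0 \<rightarrow> v_1 \<rightarrow> ... \<rightarrow> v_m = v_0 of positive length.\<close>

definition has_directed_cycle :: "real^'n^'n \<Rightarrow> bool" where
  "has_directed_cycle M \<longleftrightarrow>
     (\<exists>m::nat. \<exists>v::nat \<Rightarrow> 'n. m \<ge> 1 \<and> v 0 = v m \<and> (\<forall>t<m. M $ v t $ v (Suc t) > 0))"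

end

theory Submission
  imports Defs
begin

lemma mm_ge: "A $ i $ k * B $ k $ j \<le> (A \<otimes>\<^sub>m B) $ i $ j"
proof -
  have e: "{A $ i $ k * B $ k $ j | k. True} = range (\<lambda>k. A $ i $ k * B $ k $ j)" by auto
  have "A $ i $ k * B $ k $ j \<le> Max {A $ i $ k * B $ k $ j | k. True}"
    unfolding e by (rule Max_ge) auto
  then show ?thesis unfolding max_mult_def by simp
qed

lemma walk_pos:
  fixes A :: "real^'n::finite^'n"
  shows "(\<forall>t<k. A $ w t $ w (Suc t) > 0) \<Longrightarrow> max_pow A k $ w 0 $ w k > 0"
proof (induction k)
  case 0
  then show ?case by (simp add: mat_def)
next
  case (Suc k)
  then have a: "max_pow A k $ w 0 $ w k > 0" and b: "A $ w k $ w (Suc k) > 0" by auto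
  have "0 < max_pow A k $ w 0 $ w k * A $ w k $ w (Suc k)" using a b by simp
  also have "\<dots> \<le> max_pow A (Suc k) $ w 0 $ w (Suc k)" using mm_ge by simp
  finally show ?case .
qed

lemma no_cycle:
  fixes A :: "real^'n::finite^'n"
  assumes "max_nilpotent A" "m \<ge> 1" "v 0 = v m" "\<forall>t<m. A $ v t $ v (Suc t) > 0"
  shows False
proof -
  obtain k where k: "max_pow A k = 0" using assms(1) unfolding max_nilpotent_def by blast
  define w where "w t = v (t mod m)" for t
  have "\<forall>t<k. A $ w t $ w (Suc t) > 0"
  proof (intro allI impI)
    fix t
    have tm: "t mod m < m" using assms(2) by simp
    show "A $ w t $ w (Suc t) > 0"
    proof (cases "Suc (t mod m) = m")
      case True
      then have "w (Suc t) = v (Suc (t mod m))" unfolding w_def using assms(3)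
        by (simp add: mod_Suc)
      then show ?thesis using assms(4) tm unfolding w_def by simp
    next
      case False
      then have "w (Suc t) = v (Suc (t mod m))" unfolding w_def by (simp add: mod_Suc)
      then show ?thesis using assms(4) tm unfolding w_def by simp
    qed
  qed
  from walk_pos[OF this] k show False by simp
qed

theorem lemma3p8:
  fixes A B :: "real^'n::finite^'n"
  assumes "nonneg_mat A" and "nonneg_mat B"
    and "max_nilpotent A" and "max_nilpotent B"
    and "has_directed_cycle (A \<oplus>\<^sub>m B)"
  shows "\<exists>u w. ((A \<otimes>\<^sub>m B) \<oplus>\<^sub>m (B \<otimes>\<^sub>m A)) $ u $ w > 0"
proof (rule ccontr)
  assume "\<not> ?thesis"
  then have C: "\<And>u w. ((A \<otimes>\<^sub>m B) \<oplus>\<^sub>m (B \<otimes>\<^sub>m A)) $ u $ w \<le> 0" by (simp add: not_less)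
  have AB: "\<And>i k j. A $ i $ k > 0 \<Longrightarrow> B $ k $ j > 0 \<Longrightarrow> False"
  proof -
    fix i k j assume "A $ i $ k > 0" "B $ k $ j > 0"
    then have "0 < A $ i $ k * B $ k $ j" by simp
    also have "\<dots> \<le> (A \<otimes>\<^sub>m B) $ i $ j" by (rule mm_ge)
    also have "\<dots> \<le> 0" using C[of i j] unfolding max_add_def by simp
    finally show False by simp
  qed
  have BA: "\<And>i k j. B $ i $ k > 0 \<Longrightarrow> A $ k $ j > 0 \<Longrightarrow> False"
  proof -
    fix i k j assume "B $ i $ k > 0" "A $ k $ j > 0"
    then have "0 < B $ i $ k * A $ k $ j" by simp
    also have "\<dots> \<le> (B \<otimes>\<^sub>m A) $ i $ j" by (rule mm_ge)
    also have "\<dots> \<le> 0" using C[of i j] unfolding max_add_def by simp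
    finally show False by simp
  qed
  obtain m v where m: "m \<ge> 1" "v 0 = v m" and e: "\<forall>t<m. (A \<oplus>\<^sub>m B) $ v t $ v (Suc t) > 0"
    using assms(5) unfolding has_directed_cycle_def by blast
  have e': "\<And>t. t < m \<Longrightarrow> A $ v t $ v (Suc t) > 0 \<or> B $ v t $ v (Suc t) > 0"
    using e unfolding max_add_def by (auto simp: less_max_iff_disj)
  show False
  proof (cases "A $ v 0 $ v 1 > 0")
    case True
    have "\<forall>t<m. A $ v t $ v (Suc t) > 0"
    proof (intro allI impI)
      fix t assume "t < m" then show "A $ v t $ v (Suc t) > 0"
      proof (induction t)
        case 0 then show ?case using True by simp
      next
        case (Suc t)
        then have "A $ v t $ v (Suc t) > 0" by simp
        then show ?case using e'[OF Suc.prems] AB by blast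
      qed
    qed
    then show False using no_cycle[OF assms(3) m] by blast
  next
    case False
    then have B0: "B $ v 0 $ v 1 > 0" using e' m by fastforce
    have "\<forall>t<m. B $ v t $ v (Suc t) > 0"
    proof (intro allI impI)
      fix t assume "t < m" then show "B $ v t $ v (Suc t) > 0"
      proof (induction t)
        case 0 then show ?case using B0 by simp
      next
        case (Suc t)
        then have "B $ v t $ v (Suc t) > 0" by simp
        then show ?case using e'[OF Suc.prems] BA by blast
      qed
    qed
    then show False using no_cycle[OF assms(4) m] by blast
  qed
qed

end
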